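(* If $\mathcal N\in\mathrm{Ch}(A'B',AB)$ is completely PPT-preserving, then $S_\infty[A|B]_{\mathcal N}\ge-\log|A'|$.
   Context: All systems are finite-dimensional; $|X|$ denotes dimension; $\log$ base 2; $\mathrm{St}(X)$ density operators; $\mathrm{Ch}(X',X)$ quantum channels. A state $\rho_{XY}$ is PPT (across $X:Y$) if its partial transpose on $Y$ is positive semidefinite. $\mathcal N\in\mathrm{Ch}(A'B',AB)$ is completely PPT-preserving if $(\mathrm{id}_{R_AR_B}\otimes\mathcal N)(\rho)$ is PPT across $R_AA:R_BB$ for every state $\rho_{R_AA'R_BB'}$ that is PPT across $R_AA':R_BB'$, with $R_A\simeq A'$, $R_B\simeq B'$ (equivalently, its Choi state $\Phi^{\mathcal N}_{R_AAR_BB}:=(\mathrm{id}\otimes\mathcal N)(\Phi_{R_AA'}\otimes\Phi_{R_BB'})$, $\Phi_{RX}:=\frac1{|X|}\sum_{i,j}|ii\rangle\langle jj|$, is PPT across $R_AA:R_BB$). $\mathcal R^{\mathbb 1}_{A'\to A}(X):=\operatorname{tr}(X)\mathbb 1_A$. $D_\infty(\rho\|\sigma):=\log\inf\{\lambda:\rho\le\lambda\sigma\}$; for a channel $\mathcal M$ and CP map $\mathcal M'$, $D_\infty[\mathcal M\|\mathcal M']:=\sup_{\rho\in\mathrm{St}(RX')}D_\infty((\mathrm{id}\otimes\mathcal M)(\rho)\|(\mathrm{id}\otimes\mathcal M')(\rho))$. $S_\infty[A|B]_{\mathcal N}:=-\inf_{\mathcal Q\in\mathrm{Ch}(B',B)}D_\infty[\mathcal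 N\|\mathcal R^{\mathbb 1}_{A'\to A}\otimes\mathcal Q]$. *)

theory Defs
  imports "HOL-Analysis.Analysis"
begin

text \<open>Finite-dimensional quantum systems are modelled by finite index types;
  an operator on system 'n is a complex matrix indexed by 'n.\<close>

type_synonym 'n cmat = "'n \<Rightarrow> 'n \<Rightarrow> complex"

definition mtrace :: "('n::finite) cmat \<Rightarrow> complex" where
  "mtrace X = (\<Sum>i\<in>UNIV. X i i)"

definition ident :: "('n::finite) cmat" where
  "ident i j = (if i = j then 1 else 0)"

definition munit :: "'n \<Rightarrow> 'n \<Rightarrow> 'n cmat" where
  "munit i j = (\<lambda>k l. if k = i \<and> l = j then 1 else 0)"

definition psd :: "('n::finite) cmat \<Rightarrow> bool" where
  "psd X \<longleftrightarrow> (\<forall>v :: 'n \<Rightarrow> complex.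
      Im (\<Sum>i\<in>UNIV. \<Sum>j\<in>UNIV. cnj (v i) * X i j * v j) = 0 \<and>
      Re (\<Sum>i\<in>UNIV. \<Sum>j\<in>UNIV. cnj (v i) * X i j * v j) \<ge> 0)"

definition loewner_le :: "('n::finite) cmat \<Rightarrow> 'n cmat \<Rightarrow> bool" where
  "loewner_le X Y \<longleftrightarrow> psd (\<lambda>i j. Y i j - X i j)"

definition density :: "('n::finite) cmat \<Rightarrow> bool" where
  "density X \<longleftrightarrow> psd X \<and> mtrace X = 1"

text \<open>Tensor product of two linear maps on matrices (defined through its
  action on matrix units and linear extension).\<close>
definition tensor_map ::
  "(('i1::finite) cmat \<Rightarrow> ('o1::finite) cmat) \<Rightarrow> (('i2::finite) cmat \<Rightarrow> ('o2::finite) cmat)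
     \<Rightarrow> ('i1 \<times> 'i2) cmat \<Rightarrow> ('o1 \<times> 'o2) cmat" where
  "tensor_map M1 M2 X = (\<lambda>(o1, o2) (o1', o2').
     \<Sum>i1\<in>UNIV. \<Sum>i1'\<in>UNIV. \<Sum>i2\<in>UNIV. \<Sum>i2'\<in>UNIV.
        X (i1, i2) (i1', i2') * M1 (munit i1 i1') o1 o1' * M2 (munit i2 i2') o2 o2')"

definition id_tensor ::
  "(('i::finite) cmat \<Rightarrow> ('o::finite) cmat) \<Rightarrow> (('r::finite) \<times> 'i) cmat \<Rightarrow> ('r \<times> 'o) cmat" where
  "id_tensor M = tensor_map (\<lambda>X. X) M"

definition clinear_map :: "(('i::finite) cmat \<Rightarrow> ('o::finite) cmat) \<Rightarrow> bool" where
  "clinear_map M \<longleftrightarrow>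
     (\<forall>X Y. M (\<lambda>i j. X i j + Y i j) = (\<lambda>k l. M X k l + M Y k l)) \<and>
     (\<forall>c X. M (\<lambda>i j. c * X i j) = (\<lambda>k l. c * M X k l))"

text \<open>Completely positive: id_R \<otimes> M is positive, with reference R \<simeq> input system.\<close>
definition completely_positive :: "(('i::finite) cmat \<Rightarrow> ('o::finite) cmat) \<Rightarrow> bool" where
  "completely_positive M \<longleftrightarrow>
     (\<forall>X :: ('i \<times> 'i) cmat. psd X \<longrightarrow> psd (id_tensor M X))"

definition trace_preserving :: "(('i::finite) cmat \<Rightarrow> ('o::finite) cmat) \<Rightarrow> bool" where
  "trace_preserving M \<longleftrightarrow> (\<forall>X. mtrace (M X) = mtrace X)"

definition channel :: "(('i::finite) cmat \<Rightarrow> ('o::finite) cmat) \<Rightarrow> bool" where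
  "channel M \<longleftrightarrow> clinear_map M \<and> completely_positive M \<and> trace_preserving M"

definition partial_transpose :: "(('x::finite) \<times> ('y::finite)) cmat \<Rightarrow> ('x \<times> 'y) cmat" where
  "partial_transpose X = (\<lambda>(x, y) (x', y'). X (x, y') (x', y))"

definition PPT :: "(('x::finite) \<times> ('y::finite)) cmat \<Rightarrow> bool" where
  "PPT X \<longleftrightarrow> psd (partial_transpose X)"

text \<open>Action of id_{R_A R_B} \<otimes> N on an operator on (R_A A') \<times> (R_B B'),
  for N \<in> Ch(A'B', AB).\<close>
definition apply_bip ::
  "((('a1::finite) \<times> ('b1::finite)) cmat \<Rightarrow> (('a::finite) \<times> ('b::finite)) cmat)
   \<Rightarrow> (('ra::finite \<times> 'a1) \<times> ('rb::finite \<times> 'b1)) cmat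
   \<Rightarrow> (('ra \<times> 'a) \<times> ('rb \<times> 'b)) cmat" where
  "apply_bip N \<rho> = (\<lambda>((ra, a), (rb, b)) ((ra', a'), (rb', b')).
     \<Sum>x\<in>UNIV. \<Sum>x'\<in>UNIV. \<Sum>y\<in>UNIV. \<Sum>y'\<in>UNIV.
       \<rho> ((ra, x), (rb, y)) ((ra', x'), (rb', y')) * N (munit (x, y) (x', y')) (a, b) (a', b'))"

text \<open>Completely PPT-preserving, with R_A \<simeq> A' and R_B \<simeq> B'.\<close>
definition completely_PPT_preserving ::
  "((('a1::finite) \<times> ('b1::finite)) cmat \<Rightarrow> (('a::finite) \<times> ('b::finite)) cmat) \<Rightarrow> bool" where
  "completely_PPT_preserving N \<longleftrightarrow>
     (\<forall>\<rho> :: (('a1 \<times> 'a1) \<times> ('b1 \<times> 'b1)) cmat.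
        density \<rho> \<and> PPT \<rho> \<longrightarrow> PPT (apply_bip N \<rho>))"

definition replace_id :: "('i::finite) cmat \<Rightarrow> ('o::finite) cmat" where
  "replace_id X = (\<lambda>k l. mtrace X * ident k l)"

text \<open>Max-relative entropy D_\<infinity>(\<rho>||\<sigma>) = log_2 inf{\<lambda> : \<rho> \<le> \<lambda>\<sigma>}, valued in
  the extended reals (+\<infinity> if no such \<lambda> exists). Only \<lambda> > 0 are considered,
  where log is defined.\<close>
definition D_max :: "('n::finite) cmat \<Rightarrow> 'n cmat \<Rightarrow> ereal" where
  "D_max \<rho> \<sigma> = Inf {ereal (log 2 c) | c. c > 0 \<and>
       loewner_le \<rho> (\<lambda>i j. complex_of_real c * \<sigma> i j)}"

text \<open>Channel max-divergence, supremum over states on R X' with R \<simeq> X'.\<close>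
definition D_max_ch ::
  "(('i::finite) cmat \<Rightarrow> ('o::finite) cmat) \<Rightarrow> ('i cmat \<Rightarrow> 'o cmat) \<Rightarrow> ereal" where
  "D_max_ch M M' = (SUP \<rho> \<in> {\<rho> :: ('i \<times> 'i) cmat. density \<rho>}.
       D_max (id_tensor M \<rho>) (id_tensor M' \<rho>))"

definition S_max ::
  "((('a1::finite) \<times> ('b1::finite)) cmat \<Rightarrow> (('a::finite) \<times> ('b::finite)) cmat) \<Rightarrow> ereal" where
  "S_max N = - (INF Q \<in> {Q :: 'b1 cmat \<Rightarrow> 'b cmat. channel Q}.
                  D_max_ch N (tensor_map (replace_id :: 'a1 cmat \<Rightarrow> 'a cmat) Q))"

end

theory Submission
  imports Defs
begin


definition qf :: "('n::finite) cmat \<Rightarrow> ('n \<Rightarrow> complex) \<Rightarrow> complex" where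
  "qf A v = (\<Sum>i\<in>UNIV. \<Sum>j\<in>UNIV. cnj (v i) * A i j * v j)"

lemma psd_qf: "psd A \<longleftrightarrow> (\<forall>v. Im (qf A v) = 0 \<and> Re (qf A v) \<ge> 0)"
  unfolding psd_def qf_def by simp

lemma sum_UNIV_prod: "(\<Sum>p\<in>(UNIV::('a::finite \<times> 'b::finite) set). f p) = (\<Sum>a\<in>UNIV. \<Sum>b\<in>UNIV. f (a,b))"
  by (simp add: sum.cartesian_product)

lemma if0_mult: "(if c then x else (0::complex)) * y = (if c then x*y else 0)" by simp
lemma mult_if0: "y * (if c then x else (0::complex)) = (if c then y*x else 0)" by simp
lemma cnj_if0: "cnj (if c then x else 0) = (if c then cnj x else 0)" by simp

lemma qf_two:
  "qf A (\<lambda>k. (if k = p then a else 0) + (if k = q then b else 0)) =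
     cnj a * A p p * a + cnj a * A p q * b + cnj b * A q p * a + cnj b * A q q * b"
  unfolding qf_def
  by (simp add: ring_distribs sum.distrib if0_mult mult_if0 cnj_if0)



lemma psd_diag: assumes "psd A" shows "Im (A i i) = 0" "Re (A i i) \<ge> 0"
proof -
  have "qf A (\<lambda>k. (if k = i then 1 else 0) + (if k = i then 0 else 0)) = A i i"
    by (subst qf_two) simp
  then show "Im (A i i) = 0" "Re (A i i) \<ge> 0" using assms unfolding psd_qf by metis+
qed

lemma psd_herm: assumes "psd A" shows "A j i = cnj (A i j)"
proof (cases "i = j")
  case True
  then show ?thesis using psd_diag[OF assms, of i] by (simp add: complex_eq_iff)
next
  case False
  have h1: "Im (A i i + A i j + A j i + A j j) = 0"
  proof -
    have "qf A (\<lambda>k. (if k = i then 1 else 0) + (if k = j then 1 else 0)) = A i i + A i j + A j i + A j j"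
      by (subst qf_two) (simp add: algebra_simps)
    then show ?thesis using assms unfolding psd_qf by metis
  qed
  have h2: "Im (A i i + \<i> * A i j - \<i> * A j i + A j j) = 0"
  proof -
    have "qf A (\<lambda>k. (if k = i then 1 else 0) + (if k = j then \<i> else 0)) = A i i + \<i> * A i j - \<i> * A j i + A j j"
      by (subst qf_two) (simp add: algebra_simps)
    then show ?thesis using assms unfolding psd_qf by metis
  qed
  have d1: "Im (A i i) = 0" "Im (A j j) = 0" using psd_diag[OF assms] by auto
  show ?thesis using h1 h2 d1 by (simp add: complex_eq_iff)
qed



lemma psd_zero_diag: assumes "psd A" "A s s = 0" shows "A s j = 0"
proof (rule ccontr)
  assume ne: "A s j \<noteq> 0"
  then have js: "j \<noteq> s" using assms by auto
  define n where "n = (cmod (A s j))^2"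
  have npos: "n > 0" using ne unfolding n_def by simp
  define t where "t = (Re (A j j) + 1) / (2 * n)"
  define x where "x = - complex_of_real t * A s j"
  have hj: "A j s = cnj (A s j)" by (rule psd_herm[OF assms(1)])
  have "qf A (\<lambda>k. (if k = j then 1 else 0) + (if k = s then x else 0)) = A j j + x * A j s + cnj x * A s j"
    by (subst qf_two) (simp add: assms(2))
  also have "\<dots> = A j j - 2 * complex_of_real t * (A s j * cnj (A s j))"
    unfolding x_def hj by (simp add: algebra_simps)
  also have "A s j * cnj (A s j) = complex_of_real n"
    unfolding n_def by (simp add: complex_mult_cnj cmod_def)
  finally have "Re (qf A (\<lambda>k. (if k = j then 1 else 0) + (if k = s then x else 0))) = Re (A j j) - 2 * t * n"
    by simp
  also have "\<dots> = -1" unfolding t_def using npos by (simp add: field_simps)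
  finally show False using assms(1) unfolding psd_qf by (metis neg_0_le_iff_le not_one_le_zero)
qed



lemma sum_if_cond: "(\<Sum>j\<in>S. if c then g j else (0::complex)) = (if c then (\<Sum>j\<in>S. g j) else 0)"
  by simp

lemma qf_add_delta:
  "qf A (\<lambda>k. v k + (if k = s then \<tau> else 0)) =
     qf A v + cnj \<tau> * (\<Sum>j\<in>UNIV. A s j * v j) + (\<Sum>i\<in>UNIV. cnj (v i) * A i s) * \<tau> + cnj \<tau> * A s s * \<tau>"
  unfolding qf_def
  by (simp add: ring_distribs sum.distrib if0_mult mult_if0 cnj_if0 sum_distrib_left sum_distrib_right algebra_simps sum_if_cond)

lemma qf_minus_rank1:
  "qf (\<lambda>i j. A i j - f i * cnj (f j)) v = qf A v - (\<Sum>i\<in>UNIV. cnj (v i) * f i) * (\<Sum>j\<in>UNIV. cnj (f j) * v j)"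
  unfolding qf_def
  by (simp add: ring_distribs sum_subtractf sum_product algebra_simps)



lemma psd_decomp_aux:
  fixes S :: "('n::finite) set"
  assumes "finite S"
  shows "\<forall>A. psd A \<and> (\<forall>i j. i \<notin> S \<or> j \<notin> S \<longrightarrow> A i j = 0) \<longrightarrow>
           (\<exists>w::'n \<Rightarrow> 'n \<Rightarrow> complex. \<forall>i j. A i j = (\<Sum>k\<in>S. w k i * cnj (w k j)))"
  using assms
proof (induction S rule: finite_induct)
  case empty
  then show ?case by auto
next
  case (insert s S)
  show ?case
  proof (intro allI impI, elim conjE)
    fix A :: "'n cmat"
    assume psdA: "psd A" and supp: "\<forall>i j. i \<notin> insert s S \<or> j \<notin> insert s S \<longrightarrow> A i j = 0"
    show "\<exists>w. \<forall>i j. A i j = (\<Sum>k\<in>insert s S. w k i * cnj (w k j))"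
    proof (cases "A s s = 0")
      case True
      have r: "A s j = 0" for j using psd_zero_diag[OF psdA True] .
      have c: "A i s = 0" for i using psd_herm[OF psdA, of s i] r[of i] by simp
      have "\<forall>i j. i \<notin> S \<or> j \<notin> S \<longrightarrow> A i j = 0"
        using supp r c by (metis insert_iff)
      then obtain w where w: "\<forall>i j. A i j = (\<Sum>k\<in>S. w k i * cnj (w k j))"
        using insert.IH psdA by blast
      define w' where "w' = w(s := (\<lambda>_. 0))"
      have "(\<Sum>k\<in>S. w' k i * cnj (w' k j)) = (\<Sum>k\<in>S. w k i * cnj (w k j))" for i j
        unfolding w'_def using insert.hyps(2) by (intro sum.cong) auto
      then have "\<forall>i j. A i j = (\<Sum>k\<in>insert s S. w' k i * cnj (w' k j))"
        using w insert.hyps by (simp add: w'_def)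
      then show ?thesis by blast
    next
      case False
      define d where "d = Re (A s s)"
      have Ass: "A s s = complex_of_real d"
        using psd_diag[OF psdA, of s] unfolding d_def by (simp add: complex_eq_iff)
      have dpos: "d > 0" using psd_diag[OF psdA, of s] False Ass unfolding d_def
        by (metis less_eq_real_def of_real_0)
      define f where "f i = A i s * complex_of_real (inverse (sqrt d))" for i
      have herm: "A s j = cnj (A j s)" for j by (rule psd_herm[OF psdA])
      have herm2: "cnj (A s j) = A j s" for j using psd_herm[OF psdA, of s j] by simp
      have sq: "inverse (sqrt d) * inverse (sqrt d) = inverse d"
        using dpos by (metis inverse_mult_distrib real_sqrt_mult_self abs_of_pos)
      have fprod: "f i * cnj (f j) = A i s * A s j / complex_of_real d" for i j
      proof -
        have "f i * cnj (f j) = A i s * cnj (A j s) * complex_of_real (inverse (sqrt d) * inverse (sqrt d))"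
          unfolding f_def by (simp only: complex_cnj_mult complex_cnj_complex_of_real of_real_mult mult_ac)
        also have "\<dots> = A i s * A s j / complex_of_real d"
          unfolding sq herm[symmetric] by (simp add: divide_inverse of_real_inverse)
        finally show ?thesis .
      qed
      define A' where "A' i j = A i j - f i * cnj (f j)" for i j
      have psdA': "psd A'"
        unfolding psd_qf
      proof
        fix v
        define \<alpha> where "\<alpha> = (\<Sum>j\<in>UNIV. A s j * v j)"
        have b: "(\<Sum>i\<in>UNIV. cnj (v i) * A i s) = cnj \<alpha>"
          unfolding \<alpha>_def by (simp add: herm2 mult.commute)
        have "qf A' v = qf A v - (\<Sum>i\<in>UNIV. cnj (v i) * f i) * (\<Sum>j\<in>UNIV. cnj (f j) * v j)"
          unfolding A'_def by (rule qf_minus_rank1)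
        also have "(\<Sum>i\<in>UNIV. cnj (v i) * f i) * (\<Sum>j\<in>UNIV. cnj (f j) * v j)
             = (\<Sum>i\<in>UNIV. \<Sum>j\<in>UNIV. cnj (v i) * (f i * cnj (f j)) * v j)"
          by (simp add: sum_product algebra_simps)
        also have "\<dots> = (\<Sum>i\<in>UNIV. \<Sum>j\<in>UNIV. cnj (v i) * A i s * (A s j * v j)) / complex_of_real d"
          unfolding fprod by (simp add: sum_divide_distrib algebra_simps)
        also have "\<dots> = (\<Sum>i\<in>UNIV. cnj (v i) * A i s) * (\<Sum>j\<in>UNIV. A s j * v j) / complex_of_real d"
          by (simp add: sum_product)
        also have "\<dots> = cnj \<alpha> * \<alpha> / complex_of_real d"
          unfolding b \<alpha>_def[symmetric] ..
        finally have e1: "qf A' v = qf A v - cnj \<alpha> * \<alpha> / complex_of_real d" .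
        define \<tau> where "\<tau> = - \<alpha> / complex_of_real d"
        have "qf A (\<lambda>k. v k + (if k = s then \<tau> else 0)) = qf A v + cnj \<tau> * \<alpha> + cnj \<alpha> * \<tau> + cnj \<tau> * A s s * \<tau>"
          unfolding qf_add_delta b \<alpha>_def ..
        also have "\<dots> = qf A v - cnj \<alpha> * \<alpha> / complex_of_real d"
          unfolding \<tau>_def Ass using dpos by (simp add: field_simps)
        finally have "qf A' v = qf A (\<lambda>k. v k + (if k = s then \<tau> else 0))" using e1 by simp
        then show "Im (qf A' v) = 0 \<and> 0 \<le> Re (qf A' v)" using psdA unfolding psd_qf by simp
      qed
      have suppA': "\<forall>i j. i \<notin> S \<or> j \<notin> S \<longrightarrow> A' i j = 0"
      proof (intro allI impI)
        fix i j assume "i \<notin> S \<or> j \<notin> S"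
        then consider "i \<notin> insert s S" | "j \<notin> insert s S" | "i = s" | "j = s" by blast
        then show "A' i j = 0"
        proof cases
          case 1
          then have "A i j = 0" "A i s = 0" using supp by auto
          then show ?thesis unfolding A'_def fprod by simp
        next
          case 2
          then have "A i j = 0" "A s j = 0" using supp by auto
          then show ?thesis unfolding A'_def fprod by simp
        next
          case 3
          then show ?thesis unfolding A'_def fprod using Ass dpos by simp
        next
          case 4
          then show ?thesis unfolding A'_def fprod using Ass dpos by simp
        qed
      qed
      obtain w where w: "\<forall>i j. A' i j = (\<Sum>k\<in>S. w k i * cnj (w k j))"
        using insert.IH psdA' suppA' by blast
      define w' where "w' = w(s := f)"
      have "(\<Sum>k\<in>S. w' k i * cnj (w' k j)) = (\<Sum>k\<in>S. w k i * cnj (w k j))" for i j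
        unfolding w'_def using insert.hyps(2) by (intro sum.cong) auto
      then have "\<forall>i j. A i j = (\<Sum>k\<in>insert s S. w' k i * cnj (w' k j))"
        using w insert.hyps by (simp add: w'_def A'_def algebra_simps)
      then show ?thesis by blast
    qed
  qed
qed

lemma psd_decomp:
  fixes A :: "('n::finite) cmat"
  assumes "psd A"
  shows "\<exists>w::'n \<Rightarrow> 'n \<Rightarrow> complex. \<forall>i j. A i j = (\<Sum>k\<in>UNIV. w k i * cnj (w k j))"
  using psd_decomp_aux[of "UNIV :: 'n set"] assms by auto



lemma perm6:
  fixes T :: "'a::finite \<Rightarrow> 'b::finite \<Rightarrow> 'c::finite \<Rightarrow> 'd::finite \<Rightarrow> 'e::finite \<Rightarrow> 'f::finite \<Rightarrow> complex"
  shows "(\<Sum>a\<in>UNIV. \<Sum>b\<in>UNIV. \<Sum>c\<in>UNIV. \<Sum>d\<in>UNIV. \<Sum>e\<in>UNIV. \<Sum>f\<in>UNIV. T a b c d e f)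
       = (\<Sum>e\<in>UNIV. \<Sum>b\<in>UNIV. \<Sum>f\<in>UNIV. \<Sum>d\<in>UNIV. \<Sum>c\<in>UNIV. \<Sum>a\<in>UNIV. T a b c d e f)"
proof -
  have L: "(\<Sum>a\<in>UNIV. \<Sum>b\<in>UNIV. \<Sum>c\<in>UNIV. \<Sum>d\<in>UNIV. \<Sum>e\<in>UNIV. \<Sum>f\<in>UNIV. T a b c d e f)
     = (\<Sum>x\<in>UNIV. case x of (a,b,c,d,e,f) \<Rightarrow> T a b c d e f)"
    by (simp add: sum_UNIV_prod)
  have R: "(\<Sum>e\<in>UNIV. \<Sum>b\<in>UNIV. \<Sum>f\<in>UNIV. \<Sum>d\<in>UNIV. \<Sum>c\<in>UNIV. \<Sum>a\<in>UNIV. T a b c d e f)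
     = (\<Sum>x\<in>UNIV. case x of (e,b,f,d,c,a) \<Rightarrow> T a b c d e f)"
    by (simp add: sum_UNIV_prod)
  have "(\<Sum>x\<in>UNIV. case x of (a,b,c,d,e,f) \<Rightarrow> T a b c d e f) = (\<Sum>x\<in>UNIV. case x of (e,b,f,d,c,a) \<Rightarrow> T a b c d e f)"
    by (rule sum.reindex_bij_witness[where i = "\<lambda>(e,b,f,d,c,a). (a,b,c,d,e,f)" and j = "\<lambda>(a,b,c,d,e,f). (e,b,f,d,c,a)"]) auto
  then show ?thesis using L R by simp
qed

lemma qf_rank1_choi:
  fixes \<psi> :: "('r::finite \<times> 'i::finite) \<Rightarrow> complex" and C :: "('i \<times> 'o::finite) cmat"
  shows "qf (\<lambda>(r,y) (r',y'). \<Sum>i\<in>UNIV. \<Sum>i'\<in>UNIV. \<psi> (r,i) * cnj (\<psi> (r',i')) * C (i,y) (i',y')) v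
       = qf C (\<lambda>(i,y). \<Sum>r\<in>UNIV. cnj (\<psi> (r,i)) * v (r,y))"
  unfolding qf_def
  apply (simp add: sum_UNIV_prod sum_distrib_left sum_distrib_right mult_ac)
  apply (subst perm6)
  apply (simp add: mult_ac)
  done



lemma perm3:
  fixes T :: "'a::finite \<Rightarrow> 'b::finite \<Rightarrow> 'c::finite \<Rightarrow> complex"
  shows "(\<Sum>a\<in>UNIV. \<Sum>b\<in>UNIV. \<Sum>c\<in>UNIV. T a b c) = (\<Sum>c\<in>UNIV. \<Sum>a\<in>UNIV. \<Sum>b\<in>UNIV. T a b c)"
proof -
  have L: "(\<Sum>a\<in>UNIV. \<Sum>b\<in>UNIV. \<Sum>c\<in>UNIV. T a b c) = (\<Sum>x\<in>UNIV. case x of (a,b,c) \<Rightarrow> T a b c)"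
    by (simp add: sum_UNIV_prod)
  have R: "(\<Sum>c\<in>UNIV. \<Sum>a\<in>UNIV. \<Sum>b\<in>UNIV. T a b c) = (\<Sum>x\<in>UNIV. case x of (c,a,b) \<Rightarrow> T a b c)"
    by (simp add: sum_UNIV_prod)
  have "(\<Sum>x\<in>UNIV. case x of (a,b,c) \<Rightarrow> T a b c) = (\<Sum>x\<in>UNIV. case x of (c,a,b) \<Rightarrow> T a b c)"
    by (rule sum.reindex_bij_witness[where i = "\<lambda>(c,a,b). (a,b,c)" and j = "\<lambda>(a,b,c). (c,a,b)"]) auto
  then show ?thesis using L R by simp
qed

lemma qf_sum:
  fixes F :: "'k::finite \<Rightarrow> ('n::finite) cmat"
  shows "qf (\<lambda>p q. \<Sum>k\<in>UNIV. F k p q) v = (\<Sum>k\<in>UNIV. qf (F k) v)"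
  unfolding qf_def
  by (simp add: sum_distrib_left sum_distrib_right perm3[where T = "\<lambda>p q k. cnj (v p) * F k p q * v q"])

lemma psd_choi:
  fixes X :: "('r::finite \<times> 'i::finite) cmat" and C :: "('i \<times> 'o::finite) cmat"
  assumes "psd X" "psd C"
  shows "psd (\<lambda>(r,y) (r',y'). \<Sum>i\<in>UNIV. \<Sum>i'\<in>UNIV. X (r,i) (r',i') * C (i,y) (i',y'))"
proof -
  obtain w :: "('r \<times> 'i) \<Rightarrow> ('r \<times> 'i) \<Rightarrow> complex" where w: "\<And>p q. X p q = (\<Sum>k\<in>UNIV. w k p * cnj (w k q))"
    using psd_decomp[OF assms(1)] by blast
  define Y where "Y k = (\<lambda>(r,y) (r',y'). \<Sum>i\<in>UNIV. \<Sum>i'\<in>UNIV. w k (r,i) * cnj (w k (r',i')) * C (i,y) (i',y'))" for k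
  have eq: "(\<lambda>(r,y) (r',y'). \<Sum>i\<in>UNIV. \<Sum>i'\<in>UNIV. X (r,i) (r',i') * C (i,y) (i',y'))
      = (\<lambda>p q. \<Sum>k\<in>UNIV. Y k p q)"
  proof (intro ext)
    fix p q :: "'r \<times> 'o"
    obtain r y where p: "p = (r,y)" by (cases p)
    obtain r' y' where q: "q = (r',y')" by (cases q)
    show "(case p of (r,y) \<Rightarrow> \<lambda>(r',y'). \<Sum>i\<in>UNIV. \<Sum>i'\<in>UNIV. X (r,i) (r',i') * C (i,y) (i',y')) q = (\<Sum>k\<in>UNIV. Y k p q)"
      unfolding p q Y_def w
      by (simp add: sum_distrib_right perm3[where T = "\<lambda>i i' k. w k (r, i) * cnj (w k (r', i')) * C (i, y) (i', y')"])
  qed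
  show ?thesis
    unfolding psd_qf eq qf_sum
  proof
    fix v
    have "qf (Y k) v = qf C (\<lambda>(i,y). \<Sum>r\<in>UNIV. cnj (w k (r,i)) * v (r,y))" for k
      unfolding Y_def by (rule qf_rank1_choi)
    then have nn: "Im (qf (Y k) v) = 0 \<and> 0 \<le> Re (qf (Y k) v)" for k
      using assms(2) unfolding psd_qf by simp
    show "Im (\<Sum>k\<in>UNIV. qf (Y k) v) = 0 \<and> 0 \<le> Re (\<Sum>k\<in>UNIV. qf (Y k) v)"
      using nn by (simp add: Im_sum Re_sum sum_nonneg)
  qed
qed



lemma psd_reindex:
  fixes Z :: "('m::finite) cmat" and f :: "'n::finite \<Rightarrow> 'm"
  assumes "psd Z" "bij f"
  shows "psd (\<lambda>p q. Z (f p) (f q))"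
  unfolding psd_qf
proof
  fix v :: "'n \<Rightarrow> complex"
  define u where "u = v \<circ> inv f"
  have bb: "bij_betw f UNIV UNIV" using assms(2) by (simp add: bij_def bij_betw_def)
  have uf: "u (f p) = v p" for p unfolding u_def using assms(2) by (simp add: bij_def)
  have "qf Z u = (\<Sum>p\<in>UNIV. \<Sum>j\<in>UNIV. cnj (u (f p)) * Z (f p) j * u j)"
    unfolding qf_def by (rule sum.reindex_bij_betw[OF bb, symmetric])
  also have "\<dots> = (\<Sum>p\<in>UNIV. \<Sum>q\<in>UNIV. cnj (u (f p)) * Z (f p) (f q) * u (f q))"
    by (intro sum.cong refl sum.reindex_bij_betw[OF bb, symmetric])
  also have "\<dots> = qf (\<lambda>p q. Z (f p) (f q)) v" unfolding qf_def uf ..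
  finally show "Im (qf (\<lambda>p q. Z (f p) (f q)) v) = 0 \<and> 0 \<le> Re (qf (\<lambda>p q. Z (f p) (f q)) v)"
    using assms(1) unfolding psd_qf by metis
qed

lemma psd_transpose:
  assumes "psd A" shows "psd (\<lambda>p q. A q p)"
  unfolding psd_qf
proof
  fix v
  have "qf (\<lambda>p q. A q p) v = qf A (\<lambda>k. cnj (v k))"
    unfolding qf_def by (subst sum.swap) (simp add: mult_ac)
  then show "Im (qf (\<lambda>p q. A q p) v) = 0 \<and> 0 \<le> Re (qf (\<lambda>p q. A q p) v)"
    using assms unfolding psd_qf by metis
qed

lemma psd_scale:
  assumes "psd A" "c \<ge> 0" shows "psd (\<lambda>p q. complex_of_real c * A p q)"
  unfolding psd_qf
proof
  fix v
  have "qf (\<lambda>p q. complex_of_real c * A p q) v = complex_of_real c * qf A v"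
    unfolding qf_def by (simp add: sum_distrib_left mult_ac)
  then show "Im (qf (\<lambda>p q. complex_of_real c * A p q) v) = 0 \<and> 0 \<le> Re (qf (\<lambda>p q. complex_of_real c * A p q) v)"
    using assms unfolding psd_qf by simp
qed

lemma psd_unscale:
  assumes "psd (\<lambda>p q. complex_of_real c * A p q)" "c > 0" shows "psd A"
proof -
  have "psd (\<lambda>p q. complex_of_real (inverse c) * (complex_of_real c * A p q))"
    using psd_scale[OF assms(1), of "inverse c"] assms(2) by simp
  moreover have "(\<lambda>p q. complex_of_real (inverse c) * (complex_of_real c * A p q)) = A"
  proof -
    have i: "inverse (complex_of_real c) * complex_of_real c = 1"
      using assms(2) by simp
    show ?thesis by (simp add: mult.assoc[symmetric] i)
  qed
  ultimately show ?thesis by simp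
qed

lemma psd_ptrace:
  fixes Z :: "(('c::finite) \<times> ('d::finite)) cmat"
  assumes "psd Z" shows "psd (\<lambda>d d'. \<Sum>c\<in>UNIV. Z (c,d) (c,d'))"
  unfolding psd_qf
proof
  fix v :: "'d \<Rightarrow> complex"
  define u where "u (c::'c) = (\<lambda>(c0,d). if c0 = c then v d else 0)" for c
  have e: "qf Z (u c) = (\<Sum>d\<in>UNIV. \<Sum>d'\<in>UNIV. cnj (v d) * Z (c,d) (c,d') * v d')" for c
    unfolding qf_def u_def by (simp add: sum_UNIV_prod if0_mult mult_if0 cnj_if0 sum_if_cond)
  have "qf (\<lambda>d d'. \<Sum>c\<in>UNIV. Z (c,d) (c,d')) v = (\<Sum>c\<in>UNIV. qf Z (u c))"
    unfolding e
    by (simp add: qf_def sum_distrib_left sum_distrib_right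
        perm3[where T = "\<lambda>d d' c. cnj (v d) * Z (c,d) (c,d') * v d'"])
  then show "Im (qf (\<lambda>d d'. \<Sum>c\<in>UNIV. Z (c,d) (c,d')) v) = 0 \<and> 0 \<le> Re (qf (\<lambda>d d'. \<Sum>c\<in>UNIV. Z (c,d) (c,d')) v)"
    using assms unfolding psd_qf by (simp add: Im_sum Re_sum sum_nonneg)
qed

lemma psd_rank1: "psd (\<lambda>p q. \<phi> p * cnj (\<phi> q))"
  unfolding psd_qf
proof
  fix v
  define s where "s = (\<Sum>q\<in>UNIV. cnj (\<phi> q) * v q)"
  have "qf (\<lambda>p q. \<phi> p * cnj (\<phi> q)) v = cnj s * s"
    unfolding qf_def s_def by (simp add: sum_product mult_ac)
  then show "Im (qf (\<lambda>p q. \<phi> p * cnj (\<phi> q)) v) = 0 \<and> 0 \<le> Re (qf (\<lambda>p q. \<phi> p * cnj (\<phi> q)) v)"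
    by (simp add: complex_mult_cnj)
qed



lemma if_conj0: "(if A \<and> B then x else (0::complex)) = (if A then if B then x else 0 else 0)"
  by simp

lemma psd_antisym_kern:
  "psd (\<lambda>(a::'c::finite,b) (a',b'). (if a = a' \<and> b = b' then 1 else 0) - (if a = b' \<and> b = a' then 1 else (0::complex)))"
  unfolding psd_qf
proof
  fix u :: "'c \<times> 'c \<Rightarrow> complex"
  define S1 where "S1 = (\<Sum>a\<in>UNIV. \<Sum>b\<in>UNIV. cnj (u (a,b)) * u (a,b))"
  define S2 where "S2 = (\<Sum>a\<in>UNIV. \<Sum>b\<in>UNIV. cnj (u (a,b)) * u (b,a))"
  have q: "qf (\<lambda>(a,b) (a',b'). (if a = a' \<and> b = b' then 1 else 0) - (if a = b' \<and> b = a' then 1 else (0::complex))) u = S1 - S2"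
    unfolding qf_def S1_def S2_def
    by (simp add: sum_UNIV_prod right_diff_distrib left_diff_distrib sum_subtractf if0_mult mult_if0 sum_if_cond if_conj0)
  have S1': "(\<Sum>a\<in>UNIV. \<Sum>b\<in>UNIV. cnj (u (b,a)) * u (b,a)) = S1"
    unfolding S1_def by (rule sum.swap)
  have S2': "(\<Sum>a\<in>UNIV. \<Sum>b\<in>UNIV. cnj (u (b,a)) * u (a,b)) = S2"
    unfolding S2_def by (rule sum.swap)
  define S3 where "S3 = (\<Sum>a\<in>UNIV. \<Sum>b\<in>UNIV. cnj (u (a,b) - u (b,a)) * (u (a,b) - u (b,a)))"
  have "S3 = S1 - S2 - (\<Sum>a\<in>UNIV. \<Sum>b\<in>UNIV. cnj (u (b,a)) * u (a,b)) + (\<Sum>a\<in>UNIV. \<Sum>b\<in>UNIV. cnj (u (b,a)) * u (b,a))"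
    unfolding S3_def S1_def S2_def
    by (simp add: algebra_simps sum_subtractf sum.distrib)
  then have s3: "S3 = 2 * (S1 - S2)" unfolding S1' S2' by simp
  have t: "cnj z * z = complex_of_real ((cmod z)^2)" for z :: complex
    by (metis complex_norm_square mult.commute)
  have "Im S3 = 0" "Re S3 \<ge> 0" unfolding S3_def t
    by (simp_all add: Im_sum Re_sum sum_nonneg del: complex_cnj_diff)
  then show "Im (qf (\<lambda>(a,b) (a',b'). (if a = a' \<and> b = b' then 1 else 0) - (if a = b' \<and> b = a' then 1 else (0::complex))) u) = 0 \<and>
        0 \<le> Re (qf (\<lambda>(a,b) (a',b'). (if a = a' \<and> b = b' then 1 else 0) - (if a = b' \<and> b = a' then 1 else (0::complex))) u)"
    unfolding q using s3 by simp
qed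

lemma psd_reduction:
  fixes Z :: "(('c::finite) \<times> ('d::finite)) cmat"
  assumes "psd (partial_transpose Z)"
  shows "psd (\<lambda>(c,d) (c',d'). (if c = c' then (\<Sum>c1\<in>UNIV. Z (c1,d) (c1,d')) else 0) - Z (c,d) (c',d'))"
proof -
  have "psd (\<lambda>p q. partial_transpose Z (prod.swap p) (prod.swap q))"
    by (rule psd_reindex[OF assms]) simp
  then have "psd (\<lambda>p q. partial_transpose Z (prod.swap q) (prod.swap p))"
    by (rule psd_transpose)
  moreover have "(\<lambda>p q. partial_transpose Z (prod.swap q) (prod.swap p)) = (\<lambda>(d,c1) (d',c1'). Z (c1',d) (c1,d'))"
    by (auto simp: partial_transpose_def fun_eq_iff)
  ultimately have X: "psd (\<lambda>(d,c1) (d',c1'). Z (c1',d) (c1,d'))" by simp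
  have Y: "psd (\<lambda>(d,c) (d',c'). \<Sum>c1\<in>UNIV. \<Sum>c1'\<in>UNIV. (case (d,c1) of (d,c1) \<Rightarrow> \<lambda>(d',c1'). Z (c1',d) (c1,d')) (d',c1') *
           (case (c1,c) of (a,b) \<Rightarrow> \<lambda>(a',b'). (if a = a' \<and> b = b' then 1 else 0) - (if a = b' \<and> b = a' then 1 else (0::complex))) (c1',c'))"
    using psd_choi[OF X psd_antisym_kern] by simp
  have "psd (\<lambda>p q. (\<lambda>(d,c) (d',c'). \<Sum>c1\<in>UNIV. \<Sum>c1'\<in>UNIV. (case (d,c1) of (d,c1) \<Rightarrow> \<lambda>(d',c1'). Z (c1',d) (c1,d')) (d',c1') *
           (case (c1,c) of (a,b) \<Rightarrow> \<lambda>(a',b'). (if a = a' \<and> b = b' then 1 else 0) - (if a = b' \<and> b = a' then 1 else (0::complex))) (c1',c')) (prod.swap p) (prod.swap q))"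
    by (rule psd_reindex[OF Y]) simp
  moreover have "(\<lambda>p q. (\<lambda>(d,c) (d',c'). \<Sum>c1\<in>UNIV. \<Sum>c1'\<in>UNIV. (case (d,c1) of (d,c1) \<Rightarrow> \<lambda>(d',c1'). Z (c1',d) (c1,d')) (d',c1') *
           (case (c1,c) of (a,b) \<Rightarrow> \<lambda>(a',b'). (if a = a' \<and> b = b' then 1 else 0) - (if a = b' \<and> b = a' then 1 else (0::complex))) (c1',c')) (prod.swap p) (prod.swap q))
     = (\<lambda>(c,d) (c',d'). (if c = c' then (\<Sum>c1\<in>UNIV. Z (c1,d) (c1,d')) else 0) - Z (c,d) (c',d'))"
    by (auto simp: fun_eq_iff right_diff_distrib sum_subtractf mult_if0 sum_if_cond if_conj0)
  ultimately show ?thesis by simp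
qed



lemma id_tensor_eq:
  "id_tensor M X (r,y) (r',y') = (\<Sum>i\<in>UNIV. \<Sum>i'\<in>UNIV. X (r,i) (r',i') * M (munit i i') y y')"
  unfolding id_tensor_def tensor_map_def munit_def
  by (simp add: if0_mult mult_if0 sum_if_cond if_conj0)

lemma tensor_map_munit:
  "tensor_map M1 M2 (munit (x,y) (x',y')) (a,b) (a',b') = M1 (munit x x') a a' * M2 (munit y y') b b'"
  unfolding tensor_map_def munit_def
  by (simp add: if0_mult mult_if0 sum_if_cond if_conj0)

lemma mtrace_munit: "mtrace (munit x x') = (if x = x' then 1 else 0)"
  unfolding mtrace_def munit_def by (simp add: if_conj0)

lemma replace_id_munit: "replace_id (munit x x') a a' = (if x = x' \<and> a = a' then 1 else 0)"
  unfolding replace_id_def mtrace_munit ident_def by simp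



lemma choi_psd:
  fixes N :: "('i::finite) cmat \<Rightarrow> ('o::finite) cmat"
  assumes "completely_positive N"
  shows "psd (\<lambda>(p,y) (p',y'). N (munit p p') y y')"
proof -
  define \<phi> where "\<phi> = (\<lambda>(p::'i,i::'i). if p = i then (1::complex) else 0)"
  have "psd (\<lambda>u w. \<phi> u * cnj (\<phi> w))" by (rule psd_rank1)
  then have "psd (id_tensor N (\<lambda>u w. \<phi> u * cnj (\<phi> w)))"
    using assms unfolding completely_positive_def by blast
  moreover have "id_tensor N (\<lambda>u w. \<phi> u * cnj (\<phi> w)) = (\<lambda>(p,y) (p',y'). N (munit p p') y y')"
    by (auto simp: fun_eq_iff id_tensor_eq \<phi>_def if0_mult mult_if0 sum_if_cond cnj_if0)
  ultimately show ?thesis by simp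
qed

lemma ppt_choi:
  fixes N :: "(('a1::finite) \<times> ('b1::finite)) cmat \<Rightarrow> (('a::finite) \<times> ('b::finite)) cmat"
  assumes "completely_PPT_preserving N"
  shows "psd (partial_transpose (\<lambda>((x::'a1,a::'a),(y::'b1,b::'b)) ((x',a'),(y',b')). N (munit (x,y) (x',y')) (a,b) (a',b')))"
proof -
  define c where "c = inverse (real CARD('a1) * real CARD('b1))"
  have cpos: "c > 0" unfolding c_def by simp
  define \<phi> where "\<phi> = (\<lambda>((r::'a1,x::'a1),(s::'b1,y::'b1)). if r = x \<and> s = y then (1::complex) else 0)"
  define \<rho> where "\<rho> = (\<lambda>u w. complex_of_real c * (\<phi> u * cnj (\<phi> w)))"
  have psd\<rho>: "psd \<rho>" unfolding \<rho>_def by (rule psd_scale[OF psd_rank1]) (use cpos in simp)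
  have tr: "mtrace \<rho> = 1"
  proof -
    have "mtrace \<rho> = complex_of_real c * (\<Sum>r\<in>(UNIV::'a1 set). \<Sum>s\<in>(UNIV::'b1 set). 1)"
      unfolding mtrace_def \<rho>_def \<phi>_def
      by (simp add: sum_UNIV_prod sum_distrib_left if_conj0 if0_mult mult_if0 sum_if_cond)
    also have "\<dots> = 1" unfolding c_def by (simp add: field_simps)
    finally show ?thesis .
  qed
  have pt: "partial_transpose \<rho> = \<rho>"
    unfolding partial_transpose_def \<rho>_def \<phi>_def by (auto simp: fun_eq_iff)
  define Zf where "Zf = (\<lambda>((x::'a1,a::'a),(y::'b1,b::'b)) ((x',a'),(y',b')). N (munit (x,y) (x',y')) (a,b) (a',b'))"
  have "PPT (apply_bip N \<rho>)"
    using assms psd\<rho> tr pt unfolding completely_PPT_preserving_def density_def PPT_def by simp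
  moreover have ab: "apply_bip N \<rho> = (\<lambda>u w. complex_of_real c * Zf u w)"
    unfolding apply_bip_def \<rho>_def \<phi>_def Zf_def
    by (auto simp: fun_eq_iff if_conj0 if0_mult mult_if0 sum_if_cond cnj_if0)
  moreover have "partial_transpose (\<lambda>u w. complex_of_real c * Zf u w) = (\<lambda>u w. complex_of_real c * partial_transpose Zf u w)"
    by (intro ext) (auto simp: partial_transpose_def split: prod.splits)
  ultimately have "psd (\<lambda>u w. complex_of_real c * partial_transpose Zf u w)"
    unfolding PPT_def by simp
  then have "psd (partial_transpose Zf)" using psd_unscale cpos by blast
  then show ?thesis unfolding Zf_def .
qed



theorem proposition13:
  fixes N :: "(('a1::finite) \<times> ('b1::finite)) cmat \<Rightarrow> (('a::finite) \<times> ('b::finite)) cmat"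
  assumes "channel N"
    and "completely_PPT_preserving N"
  shows "S_max N \<ge> - ereal (log 2 (real CARD('a1)))"
proof -
  define n where "n = real CARD('a1)"
  have npos: "n > 0" unfolding n_def by simp
  have cpN: "completely_positive N" and tpN: "trace_preserving N"
    using assms(1) unfolding channel_def by auto
  define Z where "Z = (\<lambda>((x::'a1,a::'a),(y::'b1,b::'b)) ((x',a'),(y',b')). N (munit (x,y) (x',y')) (a,b) (a',b'))"
  define KD where "KD = (\<lambda>(d::'b1 \<times> 'b) d'. \<Sum>c\<in>UNIV. Z (c,d) (c,d'))"
  define Q where "Q = (\<lambda>(Y::'b1 cmat) (b::'b) (b'::'b). complex_of_real (inverse n) * (\<Sum>y\<in>UNIV. \<Sum>y'\<in>UNIV. Y y y' * KD (y,b) (y',b')))"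
  define TQ where "TQ = tensor_map (replace_id :: 'a1 cmat \<Rightarrow> 'a cmat) Q"
  have G: "psd (\<lambda>(p,y) (p',y'). N (munit p p') y y')" by (rule choi_psd[OF cpN])
  define h where "h = (\<lambda>(((x::'a1),(a::'a)),((y::'b1),(b::'b))). ((x,y),(a,b)))"
  have bh: "bij h"
    by (rule o_bij[where g = "\<lambda>((x,y),(a,b)). ((x,a),(y,b))"]) (auto simp: h_def fun_eq_iff)
  have "psd (\<lambda>u w. (\<lambda>(p,y) (p',y'). N (munit p p') y y') (h u) (h w))"
    by (rule psd_reindex[OF G bh])
  moreover have "(\<lambda>u w. (\<lambda>(p,y) (p',y'). N (munit p p') y y') (h u) (h w)) = Z"
    by (intro ext) (auto simp: h_def Z_def split: prod.splits)
  ultimately have psdZ: "psd Z" by simp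
  have psdKD: "psd KD" unfolding KD_def by (rule psd_ptrace[OF psdZ])
  have pptZ: "psd (partial_transpose Z)" unfolding Z_def by (rule ppt_choi[OF assms(2)])
  have psdL: "psd (\<lambda>(c,d) (c',d'). (if c = c' then (\<Sum>c1\<in>UNIV. Z (c1,d) (c1,d')) else 0) - Z (c,d) (c',d'))"
    by (rule psd_reduction[OF pptZ])
  have Qm: "Q (munit y y') b b' = complex_of_real (inverse n) * KD (y,b) (y',b')" for y y' b b'
    unfolding Q_def munit_def by (simp add: if0_mult mult_if0 sum_if_cond if_conj0)
  have TQm: "TQ (munit (x,y) (x',y')) (a,b) (a',b') = (if x = x' \<and> a = a' then 1 else 0) * (complex_of_real (inverse n) * KD (y,b) (y',b'))"
    for x x' y y' a a' b b'
    unfolding TQ_def tensor_map_munit replace_id_munit Qm ..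
  define CM where "CM = (\<lambda>(i,y) (i',y'). complex_of_real n * TQ (munit i i') y y' - N (munit i i') y y')"
  define g where "g = (\<lambda>(((x::'a1),(y::'b1)),((a::'a),(b::'b))). ((x,a),(y,b)))"
  have bg: "bij g"
    by (rule o_bij[where g = "\<lambda>((x,a),(y,b)). ((x,y),(a,b))"]) (auto simp: g_def fun_eq_iff)
  have "psd (\<lambda>u w. (\<lambda>(c,d) (c',d'). (if c = c' then (\<Sum>c1\<in>UNIV. Z (c1,d) (c1,d')) else 0) - Z (c,d) (c',d')) (g u) (g w))"
    by (rule psd_reindex[OF psdL bg])
  moreover have "(\<lambda>u w. (\<lambda>(c,d) (c',d'). (if c = c' then (\<Sum>c1\<in>UNIV. Z (c1,d) (c1,d')) else 0) - Z (c,d) (c',d')) (g u) (g w)) = CM"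
    using npos by (intro ext) (auto simp: g_def CM_def TQm KD_def Z_def split: prod.splits)
  ultimately have psdCM: "psd CM" by simp
  have main: "D_max (id_tensor N \<rho>) (id_tensor TQ \<rho>) \<le> ereal (log 2 n)" if dr: "density \<rho>" for \<rho> :: "(('a1 \<times> 'b1) \<times> ('a1 \<times> 'b1)) cmat"
  proof -
    have psd\<rho>: "psd \<rho>" using dr unfolding density_def by simp
    have "psd (\<lambda>(r,y) (r',y'). \<Sum>i\<in>UNIV. \<Sum>i'\<in>UNIV. \<rho> (r,i) (r',i') * CM (i,y) (i',y'))"
      by (rule psd_choi[OF psd\<rho> psdCM])
    moreover have "(\<lambda>(r,y) (r',y'). \<Sum>i\<in>UNIV. \<Sum>i'\<in>UNIV. \<rho> (r,i) (r',i') * CM (i,y) (i',y'))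
        = (\<lambda>u w. complex_of_real n * id_tensor TQ \<rho> u w - id_tensor N \<rho> u w)"
      by (intro ext) (auto simp: CM_def id_tensor_eq sum_distrib_left right_diff_distrib sum_subtractf mult_ac split: prod.splits)
    ultimately have "loewner_le (id_tensor N \<rho>) (\<lambda>i j. complex_of_real n * id_tensor TQ \<rho> i j)"
      unfolding loewner_le_def by simp
    then have "ereal (log 2 n) \<in> {ereal (log 2 c) | c. c > 0 \<and> loewner_le (id_tensor N \<rho>) (\<lambda>i j. complex_of_real c * id_tensor TQ \<rho> i j)}"
      using npos by blast
    then show ?thesis unfolding D_max_def by (rule Inf_lower)
  qed
  have dch: "D_max_ch N TQ \<le> ereal (log 2 n)"
    unfolding D_max_ch_def by (rule SUP_least) (use main in auto)
  have kdtr: "(\<Sum>b\<in>UNIV. KD (y,b) (y',b)) = complex_of_real n * (if y = y' then 1 else 0)" for y y'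
  proof -
    have "(\<Sum>b\<in>UNIV. KD (y,b) (y',b)) = (\<Sum>b\<in>UNIV. \<Sum>x\<in>UNIV. \<Sum>a\<in>UNIV. N (munit (x,y) (x,y')) (a,b) (a,b))"
      unfolding KD_def Z_def by (simp add: sum_UNIV_prod)
    also have "\<dots> = (\<Sum>x\<in>UNIV. \<Sum>a\<in>UNIV. \<Sum>b\<in>UNIV. N (munit (x,y) (x,y')) (a,b) (a,b))"
      by (rule perm3[where T = "\<lambda>x a b. N (munit (x,y) (x,y')) (a,b) (a,b)", symmetric])
    also have "\<dots> = (\<Sum>x\<in>UNIV. mtrace (N (munit (x,y) (x,y'))))"
      unfolding mtrace_def by (simp add: sum_UNIV_prod)
    also have "\<dots> = (\<Sum>x\<in>(UNIV::'a1 set). (if y = y' then 1 else 0))"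
      using tpN unfolding trace_preserving_def by (simp add: mtrace_munit)
    also have "\<dots> = complex_of_real n * (if y = y' then 1 else 0)"
      unfolding n_def by simp
    finally show ?thesis .
  qed
  have chQ: "channel Q"
    unfolding channel_def
  proof (intro conjI)
    show "clinear_map Q"
      unfolding clinear_map_def Q_def
      by (simp add: fun_eq_iff ring_distribs sum.distrib sum_distrib_left mult_ac)
    show "trace_preserving Q"
      unfolding trace_preserving_def
    proof
      fix X :: "'b1 cmat"
      have "mtrace (Q X) = (\<Sum>b\<in>UNIV. \<Sum>y\<in>UNIV. \<Sum>y'\<in>UNIV. complex_of_real (inverse n) * (X y y' * KD (y,b) (y',b)))"
        unfolding mtrace_def Q_def by (simp add: sum_distrib_left)
      also have "\<dots> = (\<Sum>y\<in>UNIV. \<Sum>y'\<in>UNIV. \<Sum>b\<in>UNIV. complex_of_real (inverse n) * (X y y' * KD (y,b) (y',b)))"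
        by (rule perm3[where T = "\<lambda>y y' b. complex_of_real (inverse n) * (X y y' * KD (y,b) (y',b))", symmetric])
      also have "\<dots> = complex_of_real (inverse n) * (\<Sum>y\<in>UNIV. \<Sum>y'\<in>UNIV. X y y' * (\<Sum>b\<in>UNIV. KD (y,b) (y',b)))"
        by (simp add: sum_distrib_left)
      also have "\<dots> = mtrace X"
      proof -
        have ninv: "inverse (complex_of_real n) * (z * complex_of_real n) = z" for z
          using npos by (simp add: field_simps)
        show ?thesis unfolding kdtr mtrace_def by (simp add: mult_if0 sum_distrib_left ninv)
      qed
      finally show "mtrace (Q X) = mtrace X" .
    qed
    show "completely_positive Q"
      unfolding completely_positive_def
    proof (intro allI impI)
      fix X :: "('b1 \<times> 'b1) cmat"
      assume "psd X"
      have psdK': "psd (\<lambda>p q. complex_of_real (inverse n) * KD p q)"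
        by (rule psd_scale[OF psdKD]) (use npos in simp)
      have "psd (\<lambda>(r,y) (r',y'). \<Sum>i\<in>UNIV. \<Sum>i'\<in>UNIV. X (r,i) (r',i') * (\<lambda>p q. complex_of_real (inverse n) * KD p q) (i,y) (i',y'))"
        by (rule psd_choi[OF \<open>psd X\<close> psdK'])
      moreover have "(\<lambda>(r,y) (r',y'). \<Sum>i\<in>UNIV. \<Sum>i'\<in>UNIV. X (r,i) (r',i') * (\<lambda>p q. complex_of_real (inverse n) * KD p q) (i,y) (i',y'))
          = id_tensor Q X"
        by (intro ext) (auto simp: id_tensor_eq Qm split: prod.splits)
      ultimately show "psd (id_tensor Q X)" by simp
    qed
  qed
  have "(INF Q \<in> {Q :: 'b1 cmat \<Rightarrow> 'b cmat. channel Q}. D_max_ch N (tensor_map (replace_id :: 'a1 cmat \<Rightarrow> 'a cmat) Q))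
        \<le> D_max_ch N TQ"
    unfolding TQ_def by (rule INF_lower) (use chQ in simp)
  also have "\<dots> \<le> ereal (log 2 n)" by (rule dch)
  finally show ?thesis unfolding S_max_def n_def by (metis ereal_minus_le_minus)
qed


end
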